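(* Let $M\in(0,1)$ and $x\in(0,1)$. The map $V\mapsto Y_{M,V}(x)=\int_0^xF_{M,V}(t)\,dt$ is strictly increasing on $(0,M-M^2)$.
   Context: For $M\in(0,1)$, $0<V<M-M^2$, $F_{M,V}$ is the distribution function of the Beta$(\alpha,\beta)$ law with $\alpha=\frac{M(M-M^2-V)}{V}$, $\beta=\frac{(1-M)(M-M^2-V)}{V}$, i.e. the Beta law with mean $M$ and variance $V$. *)

theory Defs
  imports "HOL-Analysis.Analysis"
begin

text \<open>Parameters of the Beta law with mean M and variance V.\<close>
definition beta_alpha :: "real \<Rightarrow> real \<Rightarrow> real" where
  "beta_alpha M V = M * (M - M^2 - V) / V"

definition beta_beta :: "real \<Rightarrow> real \<Rightarrow> real" where
  "beta_beta M V = (1 - M) * (M - M^2 - V) / V"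

definition beta_density :: "real \<Rightarrow> real \<Rightarrow> real \<Rightarrow> real" where
  "beta_density a b t =
     (if 0 < t \<and> t < 1 then t powr (a - 1) * (1 - t) powr (b - 1) / Beta a b else 0)"

definition F_MV :: "real \<Rightarrow> real \<Rightarrow> real \<Rightarrow> real" where
  "F_MV M V t = (LBINT s:{..t}. beta_density (beta_alpha M V) (beta_beta M V) s)"

definition Y_MV :: "real \<Rightarrow> real \<Rightarrow> real \<Rightarrow> real" where
  "Y_MV M V x = (LBINT t:{0..x}. F_MV M V t)"

end

theory Submission imports Defs begin

lemma Beta_pos_real: "a > 0 \<Longrightarrow> b > 0 \<Longrightarrow> Beta a b > (0::real)"
  unfolding Beta_def by (intro divide_pos_pos mult_pos_pos Gamma_real_pos) auto

lemma bd_eq: "beta_density a b s = indicator {0..1} s * (s powr (a-1) * (1-s) powr (b-1)) / Beta a b"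
  unfolding beta_density_def by (auto simp: indicator_def)

lemma bd_nonneg: "a > 0 \<Longrightarrow> b > 0 \<Longrightarrow> beta_density a b s \<ge> 0"
  unfolding beta_density_def using Beta_pos_real[of a b] by auto

lemma bd_meas[measurable]: "beta_density a b \<in> borel_measurable borel"
  unfolding bd_eq[abs_def] by measurable

lemma bd_int:
  assumes "a > 0" "b > 0"
  shows "integrable lborel (beta_density a b)" "(LINT s|lborel. beta_density a b s) = 1"
proof -
  have si: "set_integrable lborel {0..1} (\<lambda>t. t powr (a - 1) * (1 - t) powr (b - 1))"
    using integrable_Beta[OF assms] .
  have e: "beta_density a b = (\<lambda>s. (indicator {0..1} s *\<^sub>R (s powr (a-1) * (1-s) powr (b-1))) / Beta a b)"
    by (auto simp: bd_eq)
  show "integrable lborel (beta_density a b)"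
    unfolding e using si unfolding set_integrable_def by (intro integrable_divide)
  have "(LINT s|lborel. beta_density a b s) = (LINT t:{0..1}|lborel. t powr (a - 1) * (1 - t) powr (b - 1)) / Beta a b"
    unfolding e set_lebesgue_integral_def by simp
  also have "\<dots> = integral {0..1} (\<lambda>t. t powr (a - 1) * (1 - t) powr (b - 1)) / Beta a b"
    using set_borel_integral_eq_integral(2)[OF si] by simp
  also have "\<dots> = 1" using has_integral_Beta_real[OF assms] Beta_pos_real[OF assms]
    by (simp add: integral_unique)
  finally show "(LINT s|lborel. beta_density a b s) = 1" .
qed

lemma bd_mean:
  assumes "a > 0" "b > 0"
  shows "integrable lborel (\<lambda>s. s * beta_density a b s)" "(LINT s|lborel. s * beta_density a b s) = a / (a + b)"
proof -
  have a1: "a + 1 > 0" using assms by simp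
  have na: "a \<notin> \<int>\<^sub>\<le>\<^sub>0" using assms by (auto elim!: nonpos_Ints_cases)
  have si: "set_integrable lborel {0..1} (\<lambda>t. t powr (a + 1 - 1) * (1 - t) powr (b - 1))"
    using integrable_Beta[OF a1 assms(2)] .
  have pw: "s * s powr (a - 1) = s powr (a + 1 - 1)" if "s \<ge> 0" for s :: real
  proof (cases "s = 0")
    case False then show ?thesis using that by (simp add: powr_add[symmetric] powr_mult_base)
  qed simp
  have e: "(\<lambda>s. s * beta_density a b s) = (\<lambda>s. (indicator {0..1} s *\<^sub>R (s powr (a + 1 - 1) * (1-s) powr (b-1))) / Beta a b)"
    by (auto simp: bd_eq indicator_def pw mult.assoc[symmetric])
  show "integrable lborel (\<lambda>s. s * beta_density a b s)"
    unfolding e using si unfolding set_integrable_def by (intro integrable_divide)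
  have "(LINT s|lborel. s * beta_density a b s) = (LINT t:{0..1}|lborel. t powr (a + 1 - 1) * (1 - t) powr (b - 1)) / Beta a b"
    unfolding e set_lebesgue_integral_def by simp
  also have "\<dots> = integral {0..1} (\<lambda>t. t powr (a + 1 - 1) * (1 - t) powr (b - 1)) / Beta a b"
    using set_borel_integral_eq_integral(2)[OF si] by simp
  also have "\<dots> = Beta (a+1) b / Beta a b" using has_integral_Beta_real[OF a1 assms(2)]
    by (simp add: integral_unique)
  also have "\<dots> = a / (a + b)" using Beta_plus1_left[of a b] Beta_pos_real[OF assms] assms na
    by (simp add: field_simps)
  finally show "(LINT s|lborel. s * beta_density a b s) = a / (a + b)" .
qed

lemma Y_repr:
  assumes "a > 0" "b > 0"
  shows "(LBINT t:{0..x}. (LBINT s:{..t}. beta_density a b s)) = (LINT s|lborel. beta_density a b s * max (x - s) 0)"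
proof -
  define f where "f = beta_density a b"
  have fnn: "\<And>s. f s \<ge> 0" unfolding f_def using bd_nonneg[OF assms] .
  have fm[measurable]: "f \<in> borel_measurable borel" unfolding f_def by measurable
  have fi: "integrable lborel f" unfolding f_def using bd_int[OF assms] by simp
  define F where "F t = (LBINT s:{..t}. f s)" for t
  have F2: "F t = (LINT s|lborel. f s * indicator {..t} s)" for t
    unfolding F_def set_lebesgue_integral_def by (simp add: mult.commute)
  have Fi: "integrable lborel (\<lambda>s. f s * indicator {..t} s)" for t
    by (rule integrable_real_mult_indicator) (use fi in auto)
  have Fe: "ennreal (F t) = (\<integral>\<^sup>+ s. ennreal (f s * indicator {..t} s) \<partial>lborel)" for t
    unfolding F2 by (rule nn_integral_eq_integral[symmetric]) (use Fi fnn in auto)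
  have Fnn: "F t \<ge> 0" for t unfolding F2 by (rule Bochner_Integration.integral_nonneg) (use fnn in auto)
  have Fmono: "mono F"
  proof
    fix t t' :: real assume "t \<le> t'"
    then show "F t \<le> F t'" unfolding F2
      by (intro integral_mono Fi) (auto simp: indicator_def fnn)
  qed
  have Fm[measurable]: "F \<in> borel_measurable borel" using borel_measurable_mono[OF Fmono] .
  have "(LBINT t:{0..x}. F t) = (LINT t|lborel. indicator {0..x} t * F t)"
    unfolding set_lebesgue_integral_def by simp
  also have "\<dots> = enn2real (\<integral>\<^sup>+ t. ennreal (indicator {0..x} t * F t) \<partial>lborel)"
    by (rule integral_eq_nn_integral) (auto simp: Fnn)
  also have "(\<integral>\<^sup>+ t. ennreal (indicator {0..x} t * F t) \<partial>lborel)
     = (\<integral>\<^sup>+ t. (\<integral>\<^sup>+ s. ennreal (f s * indicator {..t} s * indicator {0..x} t) \<partial>lborel) \<partial>lborel)"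
  proof (rule nn_integral_cong)
    fix t :: real
    have "ennreal (indicator {0..x} t * F t) = ennreal (indicator {0..x} t) * ennreal (F t)"
      by (rule ennreal_mult) (auto simp: Fnn)
    also have "\<dots> = (\<integral>\<^sup>+ s. ennreal (indicator {0..x} t) * ennreal (f s * indicator {..t} s) \<partial>lborel)"
      unfolding Fe by (rule nn_integral_cmult[symmetric]) measurable
    also have "\<dots> = (\<integral>\<^sup>+ s. ennreal (f s * indicator {..t} s * indicator {0..x} t) \<partial>lborel)"
      by (rule nn_integral_cong) (auto simp: ennreal_mult[symmetric] fnn mult.commute)
    finally show "ennreal (indicator {0..x} t * F t) = \<dots>" .
  qed
  also have "\<dots> = (\<integral>\<^sup>+ s. (\<integral>\<^sup>+ t. ennreal (f s * indicator {..t} s * indicator {0..x} t) \<partial>lborel) \<partial>lborel)"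
  proof (rule lborel_pair.Fubini')
    have e: "(\<lambda>(s, t). ennreal (f s * indicator {..t} s * indicator {0..x} t)) =
      (\<lambda>p. ennreal (f (fst p) * (if fst p \<le> snd p then 1 else 0) * (if 0 \<le> snd p \<and> snd p \<le> x then 1 else 0)))"
      by (auto simp: indicator_def fun_eq_iff)
    show "(\<lambda>(s, t). ennreal (f s * indicator {..t} s * indicator {0..x} t)) \<in> borel_measurable (lborel \<Otimes>\<^sub>M lborel)"
      unfolding e by measurable
  qed
  also have "\<dots> = (\<integral>\<^sup>+ s. ennreal (f s * max (x - s) 0) \<partial>lborel)"
  proof (rule nn_integral_cong)
    fix s :: real
    show "(\<integral>\<^sup>+ t. ennreal (f s * indicator {..t} s * indicator {0..x} t) \<partial>lborel) = ennreal (f s * max (x - s) 0)"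
    proof (cases "s \<ge> 0")
      case True
      have "(\<integral>\<^sup>+ t. ennreal (f s * indicator {..t} s * indicator {0..x} t) \<partial>lborel)
          = (\<integral>\<^sup>+ t. ennreal (f s) * indicator {s..x} t \<partial>lborel)"
        by (rule nn_integral_cong) (use True in \<open>auto simp: indicator_def\<close>)
      also have "\<dots> = ennreal (f s) * emeasure lborel {s..x}"
        by (rule nn_integral_cmult_indicator) simp
      also have "\<dots> = ennreal (f s * max (x - s) 0)"
        by (simp add: emeasure_lborel_Icc_eq ennreal_mult[symmetric] fnn max_def)
      finally show ?thesis .
    next
      case False
      then have "f s = 0" unfolding f_def beta_density_def by auto
      then show ?thesis by simp
    qed
  qed
  finally have "(LBINT t:{0..x}. F t) = enn2real (\<integral>\<^sup>+ s. ennreal (f s * max (x - s) 0) \<partial>lborel)" .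
  also have "\<dots> = (LINT s|lborel. f s * max (x - s) 0)"
    by (rule integral_eq_nn_integral[symmetric]) (auto simp: fnn)
  finally show ?thesis unfolding F_def f_def .
qed

lemma ln_chord:
  fixes y s z :: real
  assumes "0 < y" "y < s" "s < z"
  shows "((z - s) * ln y + (s - y) * ln z) / (z - y) \<le> ln s"
proof -
  define t where "t = (s - y) / (z - y)"
  have t0: "t \<ge> 0" "t \<le> 1" using assms unfolding t_def by (auto simp: field_simps)
  have tz: "t * (z - y) = s - y" using assms unfolding t_def by simp
  have st: "(1 - t) *\<^sub>R y + t *\<^sub>R z = s"
  proof -
    have "(1 - t) *\<^sub>R y + t *\<^sub>R z = y + t * (z - y)" by (simp add: algebra_simps)
    then show ?thesis using tz by simp
  qed
  have "(1 - t) * ln y + t * ln z \<le> ln s"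
    using concave_onD[OF ln_concave t0, of y z] assms st by simp
  moreover have "(1 - t) * ln y + t * ln z = ((z - s) * ln y + (s - y) * ln z) / (z - y)"
  proof -
    have "1 - t = (z - s) / (z - y)" using assms unfolding t_def by (simp add: field_simps)
    then show ?thesis unfolding t_def by (simp add: add_divide_distrib)
  qed
  ultimately show ?thesis by simp
qed

lemma lint_pos:
  fixes u :: "real \<Rightarrow> real"
  assumes "integrable lborel u" "\<And>s. 0 \<le> u s" "c < d" "\<And>s. c < s \<Longrightarrow> s < d \<Longrightarrow> 0 < u s"
  shows "0 < (LINT s|lborel. u s)"
proof (rule ccontr)
  assume "\<not> 0 < (LINT s|lborel. u s)"
  moreover have "0 \<le> (LINT s|lborel. u s)" by (rule Bochner_Integration.integral_nonneg) (use assms in auto)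
  ultimately have "(LINT s|lborel. u s) = 0" by simp
  then have "AE s in lborel. u s = 0" using integral_nonneg_eq_0_iff_AE[of lborel u] assms by auto
  then obtain N where N: "{s \<in> space lborel. \<not> u s = 0} \<subseteq> N" "emeasure lborel N = 0" "N \<in> sets lborel"
    by (rule AE_E)
  have "{c<..<d} \<subseteq> N" using N(1) assms(4) by force
  then have "emeasure lborel {c<..<d} \<le> emeasure lborel N" by (intro emeasure_mono N(3))
  then show False using N(2) assms(3) by simp
qed

lemma bd_supp: "beta_density a b s \<noteq> 0 \<Longrightarrow> 0 < s \<and> s < 1"
  unfolding beta_density_def by (auto split: if_splits)

lemma key:
  fixes a1 b1 a2 b2 x :: real
  assumes pos: "a1 > 0" "b1 > 0" "a2 > 0" "b2 > 0" and lt: "a2 < a1" "b2 < b1"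
    and mean: "a1 / (a1 + b1) = a2 / (a2 + b2)" and x: "0 < x" "x < 1"
  shows "(LINT s|lborel. beta_density a1 b1 s * max (x - s) 0) < (LINT s|lborel. beta_density a2 b2 s * max (x - s) 0)"
proof -
  define f1 where "f1 = beta_density a1 b1"
  define f2 where "f2 = beta_density a2 b2"
  define h where "h s = max (x - s) (0::real)" for s
  define g where "g s = f2 s - f1 s" for s
  have f1i: "integrable lborel f1" "(LINT s|lborel. f1 s) = 1"
    unfolding f1_def using bd_int[OF pos(1,2)] by auto
  have f2i: "integrable lborel f2" "(LINT s|lborel. f2 s) = 1"
    unfolding f2_def using bd_int[OF pos(3,4)] by auto
  have f1m: "integrable lborel (\<lambda>s. s * f1 s)" "(LINT s|lborel. s * f1 s) = a1 / (a1 + b1)"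
    unfolding f1_def using bd_mean[OF pos(1,2)] by auto
  have f2m: "integrable lborel (\<lambda>s. s * f2 s)" "(LINT s|lborel. s * f2 s) = a1 / (a1 + b1)"
    unfolding f2_def using bd_mean[OF pos(3,4)] mean by auto
  have f1nn: "\<And>s. f1 s \<ge> 0" unfolding f1_def using bd_nonneg[OF pos(1,2)] .
  have f2nn: "\<And>s. f2 s \<ge> 0" unfolding f2_def using bd_nonneg[OF pos(3,4)] .
  have hb: "\<And>s. 0 < s \<Longrightarrow> h s \<le> 1" "\<And>s. h s \<ge> 0" unfolding h_def using x by auto
  have hfi: "integrable lborel (\<lambda>s. f s * h s)" if "integrable lborel f" "\<And>s. f s \<ge> 0"
     "\<And>s. f s \<noteq> 0 \<Longrightarrow> 0 < s" "f \<in> borel_measurable borel" for f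
  proof (rule Bochner_Integration.integrable_bound[OF that(1)])
    show "(\<lambda>s. f s * h s) \<in> borel_measurable lborel" unfolding h_def using that(4) by measurable
    show "AE s in lborel. norm (f s * h s) \<le> norm (f s)"
    proof (rule AE_I2)
      fix s show "norm (f s * h s) \<le> norm (f s)"
      proof (cases "f s = 0")
        case False
        then have "0 \<le> h s" "h s \<le> 1" using hb that(3) by auto
        then show ?thesis using that(2)[of s] by (simp add: abs_mult mult_left_le)
      qed simp
    qed
  qed
  have hf1: "integrable lborel (\<lambda>s. f1 s * h s)"
    by (rule hfi) (use f1i f1nn bd_supp in \<open>auto simp: f1_def\<close>)
  have hf2: "integrable lborel (\<lambda>s. f2 s * h s)"
    by (rule hfi) (use f2i f2nn bd_supp in \<open>auto simp: f2_def\<close>)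
  have gi: "integrable lborel g" "(LINT s|lborel. g s) = 0"
    unfolding g_def using f1i f2i by auto
  have gmi: "integrable lborel (\<lambda>s. s * g s)" "(LINT s|lborel. s * g s) = 0"
    unfolding g_def using f1m f2m by (auto simp: right_diff_distrib)
  have g0: "g s = 0" if "\<not> (0 < s \<and> s < 1)" for s
    using that unfolding g_def f1_def f2_def beta_density_def by auto
  define G1 where "G1 s = s powr (a1 - 1) * (1 - s) powr (b1 - 1) / Beta a1 b1" for s
  define G2 where "G2 s = s powr (a2 - 1) * (1 - s) powr (b2 - 1) / Beta a2 b2" for s
  have B1: "Beta a1 b1 > 0" using Beta_pos_real pos by auto
  have B2: "Beta a2 b2 > 0" using Beta_pos_real pos by auto
  have G1p: "G1 s > 0" "f1 s = G1 s" if "0 < s" "s < 1" for s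
    using that B1 unfolding G1_def f1_def beta_density_def by auto
  have G2p: "G2 s > 0" "f2 s = G2 s" if "0 < s" "s < 1" for s
    using that B2 unfolding G2_def f2_def beta_density_def by auto
  define K where "K = ln (Beta a1 b1) - ln (Beta a2 b2)"
  define \<psi> where "\<psi> s = ln (G2 s) - ln (G1 s)" for s
  have \<psi>eq: "\<psi> s = K + (a2 - a1) * ln s + (b2 - b1) * ln (1 - s)" if "0 < s" "s < 1" for s
    using that B1 B2 unfolding \<psi>_def K_def G1_def G2_def
    by (simp add: ln_mult ln_div ln_powr algebra_simps)
  have gpos: "g s > 0 \<longleftrightarrow> \<psi> s > 0" if "0 < s" "s < 1" for s
    using G1p[OF that] G2p[OF that] unfolding g_def \<psi>_def by auto
  have gneg: "g s < 0 \<longleftrightarrow> \<psi> s < 0" if "0 < s" "s < 1" for s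
    using G1p[OF that] G2p[OF that] unfolding g_def \<psi>_def by auto
  have cvx: "\<psi> s \<le> ((z - s) * \<psi> y + (s - y) * \<psi> z) / (z - y)" if "0 < y" "y < s" "s < z" "z < 1" for y s z
  proof -
    have l1: "((z - s) * ln y + (s - y) * ln z) / (z - y) \<le> ln s" using ln_chord that by auto
    have l2: "((z - s) * ln (1 - y) + (s - y) * ln (1 - z)) / (z - y) \<le> ln (1 - s)"
      using ln_chord[of "1 - z" "1 - s" "1 - y"] that by (simp add: algebra_simps)
    have m1: "(a2 - a1) * ln s \<le> (a2 - a1) * (((z - s) * ln y + (s - y) * ln z) / (z - y))"
      using l1 lt by (intro mult_left_mono_neg) auto
    have m2: "(b2 - b1) * ln (1 - s) \<le> (b2 - b1) * (((z - s) * ln (1 - y) + (s - y) * ln (1 - z)) / (z - y))"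
      using l2 lt by (intro mult_left_mono_neg) auto
    have zy: "z - y > 0" using that by simp
    have "((z - s) * \<psi> y + (s - y) * \<psi> z) / (z - y) =
       K + (a2 - a1) * (((z - s) * ln y + (s - y) * ln z) / (z - y))
         + (b2 - b1) * (((z - s) * ln (1 - y) + (s - y) * ln (1 - z)) / (z - y))"
    proof -
      have num: "(z - s) * \<psi> y + (s - y) * \<psi> z = K * (z - y) + (a2 - a1) * ((z - s) * ln y + (s - y) * ln z)
         + (b2 - b1) * ((z - s) * ln (1 - y) + (s - y) * ln (1 - z))"
      proof -
        have e1: "\<psi> y = K + (a2 - a1) * ln y + (b2 - b1) * ln (1 - y)" using \<psi>eq[of y] that by simp
        have e2: "\<psi> z = K + (a2 - a1) * ln z + (b2 - b1) * ln (1 - z)" using \<psi>eq[of z] that by simp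
        show ?thesis unfolding e1 e2 by (simp add: algebra_simps)
      qed
      show ?thesis unfolding num using zy by (simp add: add_divide_distrib distrib_left)
    qed
    then show ?thesis using m1 m2 \<psi>eq[of s] that by simp
  qed
  have concl: "(LINT s|lborel. f1 s * h s) < (LINT s|lborel. f2 s * h s)"
    if cd: "c < d" and nn: "\<And>s. 0 \<le> (h s - (\<alpha> + \<beta> * s)) * g s"
      and ps: "\<And>s. c < s \<Longrightarrow> s < d \<Longrightarrow> 0 < (h s - (\<alpha> + \<beta> * s)) * g s" for \<alpha> \<beta> c d
  proof -
    have ue: "(\<lambda>s. (h s - (\<alpha> + \<beta> * s)) * g s) = (\<lambda>s. (f2 s * h s - f1 s * h s) - \<alpha> * g s - \<beta> * (s * g s))"
      unfolding g_def by (auto simp: algebra_simps)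
    have ui: "integrable lborel (\<lambda>s. (h s - (\<alpha> + \<beta> * s)) * g s)"
      unfolding ue using hf1 hf2 gi gmi by auto
    have "0 < (LINT s|lborel. (h s - (\<alpha> + \<beta> * s)) * g s)"
      by (rule lint_pos[OF ui nn cd ps])
    also have "(LINT s|lborel. (h s - (\<alpha> + \<beta> * s)) * g s) =
       (LINT s|lborel. f2 s * h s) - (LINT s|lborel. f1 s * h s)"
      unfolding ue using hf1 hf2 gi gmi by simp
    finally show ?thesis by simp
  qed
  define e0 where "e0 = exp (- (\<bar>K\<bar> + 1) / (a1 - a2))"
  have e0: "0 < e0" "e0 < 1" unfolding e0_def using lt by (auto simp: field_simps)
  have \<psi>small: "\<psi> s > 0" if "0 < s" "s < e0" for s
  proof -
    have s1: "s < 1" using that e0 by simp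
    have "ln s < - (\<bar>K\<bar> + 1) / (a1 - a2)" using that unfolding e0_def
      by (metis exp_ln ln_less_cancel_iff exp_gt_zero ln_exp)
    then have "(a1 - a2) * ln s < - (\<bar>K\<bar> + 1)" using lt by (simp add: field_simps)
    moreover have "ln (1 - s) \<le> 0" using that s1 by simp
    then have "(b2 - b1) * ln (1 - s) \<ge> 0" using lt by (simp add: mult_nonpos_nonpos)
    ultimately show ?thesis using \<psi>eq[OF that(1) s1] by (simp add: algebra_simps)
  qed
  define Z where "Z = {s. 0 < s \<and> s < 1 \<and> \<psi> s < 0}"
  have Zne: "Z \<noteq> {}"
  proof
    assume "Z = {}"
    then have gnn: "0 \<le> g s" for s using g0[of s] gneg[of s] unfolding Z_def by force
    have "0 < (LINT s|lborel. g s)"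
      by (rule lint_pos[OF gi(1) gnn e0(1)]) (use \<psi>small gpos e0 in auto)
    then show False using gi by simp
  qed
  have Zb: "bdd_below Z" "bdd_above Z" unfolding Z_def by (auto intro: bdd_belowI[of _ 0] bdd_aboveI[of _ 1])
  define p where "p = Inf Z"
  define q where "q = Sup Z"
  have pZ: "p \<le> s" "s \<le> q" if "s \<in> Z" for s
    unfolding p_def q_def using that Zb by (auto intro: cInf_lower cSup_upper)
  obtain s0 where s0: "s0 \<in> Z" using Zne by auto
  have p0: "0 \<le> p" unfolding p_def by (rule cInf_greatest[OF Zne]) (auto simp: Z_def)
  have q1: "q \<le> 1" unfolding q_def by (rule cSup_least[OF Zne]) (auto simp: Z_def)
  have pq: "p \<le> q" using pZ[OF s0] by simp
  have mid: "\<psi> s < 0" if sp: "p < s" and sq: "s < q" for s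
  proof -
    obtain y where y: "y \<in> Z" "y < s" using sp cInf_less_iff[OF Zne Zb(1)] unfolding p_def by auto
    obtain z where z: "z \<in> Z" "s < z" using sq less_cSup_iff[OF Zne Zb(2)] unfolding q_def by auto
    have "\<psi> s \<le> ((z - s) * \<psi> y + (s - y) * \<psi> z) / (z - y)"
      by (rule cvx) (use y z in \<open>auto simp: Z_def\<close>)
    also have "\<dots> < 0"
      using y z unfolding Z_def by (intro divide_neg_pos add_nonpos_neg mult_nonneg_nonpos mult_pos_neg) auto
    finally show ?thesis .
  qed
  have left: "\<psi> s > 0" if "0 < s" "s < p" for s
  proof -
    have sZ: "s \<notin> Z" using pZ that by force
    have s1: "s < 1" using that pq q1 by simp
    have ge: "\<psi> s \<ge> 0" using sZ that s1 unfolding Z_def by auto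
    show ?thesis
    proof (rule ccontr)
      assume "\<not> 0 < \<psi> s"
      then have e: "\<psi> s = 0" using ge by simp
      define w where "w = (s + p) / 2"
      have w: "s < w" "w < p" using that unfolding w_def by auto
      have u: "s0 \<in> Z" "p \<le> s0" using s0 pZ by auto
      have "\<psi> w \<le> ((s0 - w) * \<psi> s + (w - s) * \<psi> s0) / (s0 - s)"
        by (rule cvx) (use w u that in \<open>auto simp: Z_def\<close>)
      also have "\<dots> < 0" using u w unfolding e Z_def by (auto intro!: divide_neg_pos mult_pos_neg)
      finally have "w \<in> Z" using w that pq q1 unfolding Z_def by auto
      then show False using pZ w by force
    qed
  qed
  have right: "\<psi> s > 0" if "q < s" "s < 1" for s
  proof -
    have sZ: "s \<notin> Z" using pZ that by force
    have s0': "0 < s" using that pq p0 by simp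
    have ge: "\<psi> s \<ge> 0" using sZ that s0' unfolding Z_def by auto
    show ?thesis
    proof (rule ccontr)
      assume "\<not> 0 < \<psi> s"
      then have e: "\<psi> s = 0" using ge by simp
      define w where "w = (s + q) / 2"
      have w: "w < s" "q < w" using that unfolding w_def by auto
      have u: "s0 \<in> Z" "s0 \<le> q" "0 < s0" using s0 pZ by (auto simp: Z_def)
      have "\<psi> w \<le> ((s - w) * \<psi> s0 + (w - s0) * \<psi> s) / (s - s0)"
        by (rule cvx) (use w u that in \<open>auto simp: Z_def\<close>)
      also have "\<dots> < 0" using u w unfolding e Z_def by (auto intro!: divide_neg_pos mult_pos_neg)
      finally have "w \<in> Z" using w that u unfolding Z_def by auto
      then show False using pZ w by force
    qed
  qed
  have gL: "g s > 0" if "0 < s" "s < p" for s using left[OF that] gpos[of s] that pq q1 by auto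
  have gR: "g s > 0" if "q < s" "s < 1" for s using right[OF that] gpos[of s] that pq p0 by auto
  have gM: "g s < 0" if "p < s" "s < q" for s using mid[OF that] gneg[of s] that p0 q1 by auto
  have notfull: "0 < p \<or> q < 1"
  proof (rule ccontr)
    assume "\<not> (0 < p \<or> q < 1)"
    then have "p = 0" "q = 1" using p0 q1 by auto
    then have gn: "0 \<le> - g s" for s using gM[of s] g0[of s] by (cases "0 < s \<and> s < 1") auto
    have "0 < (LINT s|lborel. - g s)"
      by (rule lint_pos[of "\<lambda>s. - g s" 0 1]) (use gi gn gM \<open>p = 0\<close> \<open>q = 1\<close> in auto)
    then show False using gi by simp
  qed
  have hx1: "h s = x - s" if "s \<le> x" for s using that unfolding h_def by simp
  have hx2: "h s = 0" if "x \<le> s" for s using that unfolding h_def by simp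
  consider (A) "x \<le> p" | (B) "q \<le> x" | (C) "p < x" "x < q" by linarith
  then have "(LINT s|lborel. f1 s * h s) < (LINT s|lborel. f2 s * h s)"
  proof cases
    case A
    show ?thesis
    proof (rule concl[of 0 x 0 0])
      show "0 < x" using x by simp
      fix s
      show "0 \<le> (h s - (0 + 0 * s)) * g s"
      proof (cases "0 < s \<and> s < 1")
        case True
        show ?thesis
        proof (cases "s < x")
          case True2: True
          then show ?thesis using gL[of s] True A hx1[of s] by simp
        next
          case False
          then show ?thesis using hx2[of s] by simp
        qed
      qed (simp add: g0)
    next
      fix s assume "0 < s" "s < x"
      then show "0 < (h s - (0 + 0 * s)) * g s" using gL[of s] A hx1[of s] by simp
    qed
  next
    case B
    show ?thesis
    proof (rule concl[of x 1 x "-1"])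
      show "x < 1" using x by simp
      fix s
      show "0 \<le> (h s - (x + -1 * s)) * g s"
      proof (cases "s \<le> x")
        case True
        then show ?thesis using hx1[of s] by simp
      next
        case False
        show ?thesis
        proof (cases "s < 1")
          case True
          then show ?thesis using gR[of s] B False hx2[of s] by simp
        next
          case False
          then show ?thesis using g0[of s] by simp
        qed
      qed
    next
      fix s assume "x < s" "s < 1"
      then show "0 < (h s - (x + -1 * s)) * g s" using gR[of s] B hx2[of s] by simp
    qed
  next
    case C
    define \<alpha> where "\<alpha> = (x - p) * q / (q - p)"
    define \<beta> where "\<beta> = - (x - p) / (q - p)"
    have qp: "q - p > 0" using C by simp
    have lin: "\<alpha> + \<beta> * s = (x - p) * (q - s) / (q - p)" for s
    proof -
      have "\<alpha> + \<beta> * s = ((x - p) * q + (- (x - p)) * s) / (q - p)"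
        unfolding \<alpha>_def \<beta>_def by (simp add: add_divide_distrib)
      also have "(x - p) * q + (- (x - p)) * s = (x - p) * (q - s)" by (simp add: algebra_simps)
      finally show ?thesis .
    qed
    have E1: "h s - (\<alpha> + \<beta> * s) = (x - q) * (s - p) / (q - p)" if "s \<le> x" for s
    proof -
      have "x - s = (x - s) * (q - p) / (q - p)" using qp by simp
      then have "h s - (\<alpha> + \<beta> * s) = ((x - s) * (q - p) - (x - p) * (q - s)) / (q - p)"
        unfolding hx1[OF that] lin by (metis diff_divide_distrib)
      also have "(x - s) * (q - p) - (x - p) * (q - s) = (x - q) * (s - p)" by (simp add: algebra_simps)
      finally show ?thesis .
    qed
    have E2: "h s - (\<alpha> + \<beta> * s) = (x - p) * (s - q) / (q - p)" if "x \<le> s" for s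
    proof -
      have e: "(x - p) * (s - q) = - ((x - p) * (q - s))" by (simp add: algebra_simps)
      show ?thesis unfolding hx2[OF that] lin e by simp
    qed
    have nn: "0 \<le> (h s - (\<alpha> + \<beta> * s)) * g s" for s
    proof (cases "0 < s \<and> s < 1")
      case False
      then show ?thesis using g0[of s] by simp
    next
      case True
      consider "s < p" | "s = p" | "p < s" "s < q" | "s = q" | "q < s" by linarith
      then show ?thesis
      proof cases
        case 1
        have "0 < (x - q) * (s - p) / (q - p)" using 1 C qp by (intro divide_pos_pos mult_neg_neg) auto
        then have A: "0 < h s - (\<alpha> + \<beta> * s)" using E1[of s] 1 C by simp
        have "0 < g s" using gL[of s] 1 True by simp
        then show ?thesis using mult_pos_pos[OF A, of "g s"] by linarith
      next
        case 2
        then show ?thesis using E1[of s] C by simp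
      next
        case 3
        have "h s - (\<alpha> + \<beta> * s) \<le> 0"
        proof (cases "s \<le> x")
          case True
          have "(x - q) * (s - p) / (q - p) \<le> 0" using 3 C qp
            by (intro divide_nonpos_pos mult_nonpos_nonneg) auto
          then show ?thesis using E1[OF True] by simp
        next
          case False
          have "(x - p) * (s - q) / (q - p) \<le> 0" using 3 C qp
            by (intro divide_nonpos_pos mult_nonneg_nonpos) auto
          then show ?thesis using E2[of s] False by simp
        qed
        then show ?thesis using gM[OF 3] by (intro mult_nonpos_nonpos) auto
      next
        case 4
        then show ?thesis using E2[of s] C by simp
      next
        case 5
        have "0 < (x - p) * (s - q) / (q - p)" using 5 C qp by (intro divide_pos_pos mult_pos_pos) auto
        then have A: "0 < h s - (\<alpha> + \<beta> * s)" using E2[of s] 5 C by simp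
        have "0 < g s" using gR[of s] 5 True by simp
        then show ?thesis using mult_pos_pos[OF A, of "g s"] by linarith
      qed
    qed
    show ?thesis
    proof (cases "0 < p")
      case True
      show ?thesis
      proof (rule concl[of 0 p \<alpha> \<beta>, OF True nn])
        fix s assume s: "0 < s" "s < p"
        have "0 < (x - q) * (s - p) / (q - p)" using s C qp by (intro divide_pos_pos mult_neg_neg) auto
        then have A: "0 < h s - (\<alpha> + \<beta> * s)" using E1[of s] s C by simp
        have "0 < g s" using gL[of s] s pq q1 by simp
        then show "0 < (h s - (\<alpha> + \<beta> * s)) * g s" by (rule mult_pos_pos[OF A])
      qed
    next
      case False
      then have q1': "q < 1" using notfull by simp
      show ?thesis
      proof (rule concl[of q 1 \<alpha> \<beta>, OF q1' nn])
        fix s assume s: "q < s" "s < 1"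
        have "0 < (x - p) * (s - q) / (q - p)" using s C qp by (intro divide_pos_pos mult_pos_pos) auto
        then have A: "0 < h s - (\<alpha> + \<beta> * s)" using E2[of s] s C by simp
        have "0 < g s" using gR[of s] s by simp
        then show "0 < (h s - (\<alpha> + \<beta> * s)) * g s" by (rule mult_pos_pos[OF A])
      qed
    qed
  qed
  then show ?thesis unfolding f1_def f2_def h_def .
qed

theorem lemma7:
  fixes M x :: real
  assumes "0 < M" "M < 1" "0 < x" "x < 1"
  shows "strict_mono_on {0<..<M - M^2} (\<lambda>V. Y_MV M V x)"
proof (rule strict_mono_onI)
  fix V1 V2 assume V1: "V1 \<in> {0<..<M - M^2}" and V2: "V2 \<in> {0<..<M - M^2}" and lt: "V1 < V2"
  define c where "c = M - M^2"
  define n1 where "n1 = (c - V1) / V1"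
  define n2 where "n2 = (c - V2) / V2"
  have n1p: "n1 > 0" using V1 unfolding n1_def c_def by simp
  have n2p: "n2 > 0" using V2 unfolding n2_def c_def by simp
  have n21: "n2 < n1"
  proof -
    have "n1 = c / V1 - 1" "n2 = c / V2 - 1" using V1 V2 unfolding n1_def n2_def by (auto simp: diff_divide_distrib)
    moreover have "c / V2 < c / V1" using V1 V2 lt unfolding c_def by (intro divide_strict_left_mono) auto
    ultimately show ?thesis by simp
  qed
  have a1: "beta_alpha M V1 = M * n1" "beta_beta M V1 = (1 - M) * n1"
    unfolding beta_alpha_def beta_beta_def n1_def c_def by simp_all
  have a2: "beta_alpha M V2 = M * n2" "beta_beta M V2 = (1 - M) * n2"
    unfolding beta_alpha_def beta_beta_def n2_def c_def by simp_all
  have mean: "M * n / (M * n + (1 - M) * n) = M" if "n > 0" for n :: real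
  proof -
    have "M * n + (1 - M) * n = n" by (simp add: algebra_simps)
    then show ?thesis using that by simp
  qed
  have "(LINT s|lborel. beta_density (M * n1) ((1 - M) * n1) s * max (x - s) 0)
      < (LINT s|lborel. beta_density (M * n2) ((1 - M) * n2) s * max (x - s) 0)"
    by (rule key) (use assms n1p n2p n21 mean[OF n1p] mean[OF n2p] in auto)
  then show "Y_MV M V1 x < Y_MV M V2 x"
    unfolding Y_MV_def F_MV_def a1 a2
    using Y_repr[of "M * n1" "(1 - M) * n1" x] Y_repr[of "M * n2" "(1 - M) * n2" x] assms n1p n2p by simp
qed

end
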